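(* Let $n\ge2$ and $0\le\delta<\frac1n$. Let $B=I-\delta e^{n\times n}$ and let $\mathcal B=\{b_1,\dots,b_n\}$ be the set of columns of $B$. Let $\alpha=\frac{1}{\sqrt{\delta^2n-2\delta+1}}$ and $\mathcal P^\delta=\alpha\mathcal B\cup(-\alpha\mathcal B)=\{\alpha b_1,\dots,\alpha b_n,-\alpha b_1,\dots,-\alpha b_n\}$. Then $\mathcal P^\delta$ is a positive basis of $\mathbb R^n$ with cosine measure $\frac{1-\delta n}{\sqrt{n(\delta^2n-2\delta+1)}}$.
   Context: $e^{n\times n}$ is the $n\times n$ all-ones matrix. A finite set $\mathcal P$ is a positive basis if its positive span $\{\sum\lambda_id_i:\lambda_i\ge0\}$ is $\mathbb R^n$ and no $d\in\mathcal P$ lies in the positive span of $\mathcal P\setminus\{d\}$. The cosine measure of a finite $\mathcal S\subset\mathbb R^n\setminus\{\mathbf 0\}$ is $\min_{\|u\|=1}\max_{d\in\mathcal S}\frac{d^\top u}{\|d\|}$. *)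

theory Defs
  imports "HOL-Analysis.Analysis"
begin

definition pos_span :: "('a::real_vector) set \<Rightarrow> 'a set" where
  "pos_span P = {x. \<exists>l. (\<forall>d\<in>P. l d \<ge> 0) \<and> x = (\<Sum>d\<in>P. l d *\<^sub>R d)}"

definition positive_basis :: "('a::real_vector) set \<Rightarrow> bool" where
  "positive_basis P \<longleftrightarrow> finite P \<and> pos_span P = UNIV \<and>
     (\<forall>d\<in>P. d \<notin> pos_span (P - {d}))"

text \<open>Cosine measure: min over unit vectors u of max over d of d.u/|d|
  (the minimum is attained, so we write it as an infimum).\<close>
definition cosine_measure :: "('a::real_inner) set \<Rightarrow> real" where
  "cosine_measure S = (INF u\<in>{u. norm u = 1}. Max ((\<lambda>d. (d \<bullet> u) / norm d) ` S))"

definition ones_mat :: "real^'n^'n" where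
  "ones_mat = (\<chi> i j. 1)"

end

theory Submission
  imports Defs
begin

lemma pos_span_zero: "0 \<in> pos_span P"
  unfolding pos_span_def by (rule CollectI, rule exI[of _ "\<lambda>_. 0"]) simp

lemma pos_span_iff: "x \<in> pos_span P \<longleftrightarrow> (\<exists>l. (\<forall>d\<in>P. l d \<ge> 0) \<and> x = (\<Sum>d\<in>P. l d *\<^sub>R d))"
  unfolding pos_span_def by simp

lemma pos_span_add:
  assumes "x \<in> pos_span P" "y \<in> pos_span P"
  shows "x + y \<in> pos_span P"
proof -
  from assms(1) have "\<exists>l. (\<forall>d\<in>P. l d \<ge> 0) \<and> x = (\<Sum>d\<in>P. l d *\<^sub>R d)" by (simp only: pos_span_iff)
  then obtain l1 where l1: "\<forall>d\<in>P. l1 d \<ge> 0" "x = (\<Sum>d\<in>P. l1 d *\<^sub>R d)" by (elim exE conjE)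
  from assms(2) have "\<exists>l. (\<forall>d\<in>P. l d \<ge> 0) \<and> y = (\<Sum>d\<in>P. l d *\<^sub>R d)" by (simp only: pos_span_iff)
  then obtain l2 where l2: "\<forall>d\<in>P. l2 d \<ge> 0" "y = (\<Sum>d\<in>P. l2 d *\<^sub>R d)" by (elim exE conjE)
  have e: "x + y = (\<Sum>d\<in>P. (l1 d + l2 d) *\<^sub>R d)"
    by (simp add: l1(2) l2(2) scaleR_add_left sum.distrib)
  have "\<forall>d\<in>P. l1 d + l2 d \<ge> 0" using l1(1) l2(1) by (simp add: add_nonneg_nonneg)
  then show ?thesis unfolding pos_span_iff using e by (intro exI[of _ "\<lambda>d. l1 d + l2 d"] conjI)
qed

lemma pos_span_scale:
  assumes "x \<in> pos_span P" "c \<ge> 0"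
  shows "c *\<^sub>R x \<in> pos_span P"
proof -
  from assms(1) have "\<exists>l. (\<forall>d\<in>P. l d \<ge> 0) \<and> x = (\<Sum>d\<in>P. l d *\<^sub>R d)" by (simp only: pos_span_iff)
  then obtain l where l: "\<forall>d\<in>P. l d \<ge> 0" "x = (\<Sum>d\<in>P. l d *\<^sub>R d)" by (elim exE conjE)
  have e: "c *\<^sub>R x = (\<Sum>d\<in>P. (c * l d) *\<^sub>R d)"
    by (simp add: l(2) scaleR_sum_right)
  have "\<forall>d\<in>P. c * l d \<ge> 0" using l(1) assms(2) by simp
  then show ?thesis unfolding pos_span_iff using e by (intro exI[of _ "\<lambda>d. c * l d"] conjI)
qed

lemma pos_span_mem:
  assumes "finite P" "d \<in> P"
  shows "d \<in> pos_span P"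
proof -
  have "(\<Sum>e\<in>P. (if e = d then 1 else 0) *\<^sub>R e) = (\<Sum>e\<in>P. if e = d then d else 0)"
    by (rule sum.cong) auto
  also have "\<dots> = d" using assms by simp
  finally have "d = (\<Sum>e\<in>P. (if e = d then 1 else 0) *\<^sub>R e)" by simp
  then show ?thesis unfolding pos_span_def by (intro CollectI exI[of _ "\<lambda>e. if e = d then 1 else 0"]) auto
qed

lemma pos_span_sum:
  assumes "finite I" "\<And>i. i \<in> I \<Longrightarrow> f i \<in> pos_span P"
  shows "sum f I \<in> pos_span P"
  using assms by (induction I rule: finite_induct) (auto intro: pos_span_zero pos_span_add)

lemma pos_span_sep:
  fixes u :: "'a::real_inner"
  assumes "d \<in> pos_span Q" "u \<bullet> d > 0" "\<And>e. e \<in> Q \<Longrightarrow> u \<bullet> e \<le> 0"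
  shows False
proof -
  from assms(1) have "\<exists>l. (\<forall>e\<in>Q. l e \<ge> 0) \<and> d = (\<Sum>e\<in>Q. l e *\<^sub>R e)" by (simp only: pos_span_iff)
  then obtain l where l: "\<forall>e\<in>Q. l e \<ge> 0" "d = (\<Sum>e\<in>Q. l e *\<^sub>R e)" by (elim exE conjE)
  have "u \<bullet> d = (\<Sum>e\<in>Q. l e * (u \<bullet> e))"
    by (simp add: l inner_sum_right)
  also have "\<dots> \<le> 0"
    by (rule sum_nonpos) (simp add: l assms(3) mult_nonneg_nonpos)
  finally show False using assms(2) by simp
qed

lemma col_B: "column j (mat 1 - \<delta> *\<^sub>R ones_mat :: real^'n^'n) = (\<chi> i. (if i = j then 1 else 0) - \<delta>)"
  by (simp add: column_def mat_def ones_mat_def vec_eq_iff)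

lemma inner_b:
  fixes u :: "real^'n"
  shows "(\<chi> i. (if i = j then 1 else 0) - \<delta>) \<bullet> u = u$j - \<delta> * (\<Sum>i\<in>UNIV. u$i)"
proof -
  have "\<And>i. ((if i = j then 1 else 0) - \<delta>) * u$i = (if i = j then u$i else 0) - \<delta> * u$i" by (auto simp: algebra_simps)
  then have "(\<chi> i. (if i = j then 1 else 0) - \<delta>) \<bullet> u = (\<Sum>i\<in>UNIV. (if i = j then u$i else 0) - \<delta> * u$i)"
    unfolding inner_vec_def by (intro sum.cong) auto
  then show ?thesis by (simp add: sum_subtractf sum_distrib_left)
qed

lemma sum_b:
  "(\<Sum>i\<in>UNIV. (\<chi> i. (if i = j then 1 else 0) - \<delta> :: real^'n) $ i) = 1 - \<delta> * real CARD('n)"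
  by (simp add: sum_subtractf)

lemma main:
  fixes \<delta> :: real
  assumes n2: "CARD('n::finite) \<ge> 2" and d0: "0 \<le> \<delta>" and dn: "\<delta> < 1 / real CARD('n)"
  defines "n \<equiv> real CARD('n)"
  defines "D \<equiv> \<delta>^2 * n - 2 * \<delta> + 1"
  defines "\<alpha> \<equiv> 1 / sqrt D"
  defines "b \<equiv> (\<lambda>j::'n. (\<chi> i. (if i = j then 1 else 0) - \<delta>) :: real^'n)"
  defines "P \<equiv> (\<lambda>j. \<alpha> *\<^sub>R b j) ` UNIV \<union> (\<lambda>j. - (\<alpha> *\<^sub>R b j)) ` UNIV"
  shows "positive_basis P \<and> cosine_measure P = (1 - \<delta> * n) / sqrt (n * D)"
proof -
  have npos: "n > 0" unfolding n_def by simp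
  have n2': "n \<ge> 2" unfolding n_def using n2 by linarith
  have dn1: "\<delta> * n < 1" using dn npos unfolding n_def by (simp add: field_simps)
  have "\<delta> * 2 \<le> \<delta> * n" using mult_left_mono[OF n2' d0] .
  then have dhalf: "2 * \<delta> < 1" using dn1 by linarith
  have "\<delta>^2 * n \<ge> 0" using npos by simp
  then have Dpos: "D > 0" unfolding D_def using dhalf by linarith
  have apos: "\<alpha> > 0" unfolding \<alpha>_def using Dpos by simp
  have ib: "\<And>j u. b j \<bullet> u = u$j - \<delta> * (\<Sum>i\<in>UNIV. u$i)" unfolding b_def by (rule inner_b)
  have sb: "\<And>j. (\<Sum>i\<in>UNIV. b j $ i) = 1 - \<delta> * n" unfolding b_def n_def by (rule sum_b)
  have bb: "b j \<bullet> b j = D" for j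
  proof -
    have "b j \<bullet> b j = b j $ j - \<delta> * (1 - \<delta> * n)" by (simp add: ib sb)
    also have "b j $ j = 1 - \<delta>" by (simp add: b_def)
    finally show ?thesis unfolding D_def by (simp add: power2_eq_square algebra_simps)
  qed
  have nb: "\<And>j. norm (b j) = sqrt D" by (simp add: norm_eq_sqrt_inner bb)
  have naB: "\<And>j. norm (\<alpha> *\<^sub>R b j) = 1" using Dpos by (simp add: nb \<alpha>_def)
  have normP: "\<And>d. d \<in> P \<Longrightarrow> norm d = 1" unfolding P_def using naB by auto
  have finP: "finite P" unfolding P_def by simp
  define \<kappa> where "\<kappa> = \<delta> / (1 - \<delta> * n)"
  have kk: "\<kappa> * (1 - \<delta> * n) = \<delta>" using dn1 by (simp add: \<kappa>_def)
  have memP1: "\<alpha> *\<^sub>R b j \<in> pos_span P" for j by (rule pos_span_mem[OF finP]) (unfold P_def, blast)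
  have memP2: "- (\<alpha> *\<^sub>R b j) \<in> pos_span P" for j by (rule pos_span_mem[OF finP]) (unfold P_def, blast)
  have span: "pos_span P = UNIV"
  proof -
    { fix x :: "real^'n"
      define S where "S = (\<Sum>i\<in>UNIV. x$i)"
      define c where "c j = x$j + \<kappa> * S" for j
      have sc: "(\<Sum>j\<in>UNIV. c j) = S + n * \<kappa> * S" by (simp add: c_def sum.distrib S_def n_def)
      have xeq: "x = (\<Sum>j\<in>UNIV. c j *\<^sub>R b j)"
      proof (subst vec_eq_iff, intro allI)
        fix i
        have "(\<Sum>j\<in>UNIV. c j *\<^sub>R b j) $ i = (\<Sum>j\<in>UNIV. c j * ((if i = j then 1 else 0) - \<delta>))"
          by (simp add: b_def)
        also have "\<dots> = (\<Sum>j\<in>UNIV. (if i = j then c j else 0) - \<delta> * c j)"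
          by (intro sum.cong) (auto simp: algebra_simps)
        also have "\<dots> = c i - \<delta> * (S + n * \<kappa> * S)"
          by (simp add: sum_subtractf sum_distrib_left[symmetric] sc)
        also have "\<kappa> * S - \<delta> * (n * \<kappa> * S) = \<kappa> * (1 - \<delta> * n) * S" by (simp add: algebra_simps)
        then have "\<kappa> * S - \<delta> * (n * \<kappa> * S) = \<delta> * S" using kk by simp
        then have "c i - \<delta> * (S + n * \<kappa> * S) = x $ i" by (simp add: c_def algebra_simps)
        finally show "x $ i = (\<Sum>j\<in>UNIV. c j *\<^sub>R b j) $ i" by simp
      qed
      have cm: "c j *\<^sub>R b j \<in> pos_span P" for j
      proof (cases "c j \<ge> 0")
        case True
        have e: "c j *\<^sub>R b j = (c j / \<alpha>) *\<^sub>R (\<alpha> *\<^sub>R b j)" using apos by simp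
        have nn: "c j / \<alpha> \<ge> 0" using True apos by simp
        have "(c j / \<alpha>) *\<^sub>R (\<alpha> *\<^sub>R b j) \<in> pos_span P" by (rule pos_span_scale[OF memP1 nn])
        then show ?thesis by (subst e)
      next
        case False
        have e: "c j *\<^sub>R b j = (- c j / \<alpha>) *\<^sub>R (- (\<alpha> *\<^sub>R b j))" using apos by simp
        have nn: "- c j / \<alpha> \<ge> 0" using False apos by (simp add: divide_nonpos_pos)
        have "(- c j / \<alpha>) *\<^sub>R (- (\<alpha> *\<^sub>R b j)) \<in> pos_span P" by (rule pos_span_scale[OF memP2 nn])
        then show ?thesis by (subst e)
      qed
      have "x \<in> pos_span P" using pos_span_sum[of UNIV "\<lambda>j. c j *\<^sub>R b j" P] xeq cm by simp
    }
    then show ?thesis by auto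
  qed
  define w where "w k = (\<chi> i. (if i = k then 1 else 0) + \<kappa> :: real^'n)" for k
  have sw: "(\<Sum>i\<in>UNIV. w k $ i) = 1 + n * \<kappa>" for k by (simp add: w_def sum.distrib n_def)
  have bw: "b j \<bullet> w k = (if j = k then 1 else 0)" for j k
  proof -
    have "b j \<bullet> w k = (if j = k then 1 else 0) + (\<kappa> * (1 - \<delta> * n) - \<delta>)"
      by (simp add: ib sw) (simp add: w_def algebra_simps)
    then show ?thesis using kk by simp
  qed
  have indep: "\<forall>d\<in>P. d \<notin> pos_span (P - {d})"
  proof
    fix d assume "d \<in> P"
    then consider (p) k where "d = \<alpha> *\<^sub>R b k" | (m) k where "d = - (\<alpha> *\<^sub>R b k)"
      unfolding P_def by auto
    then show "d \<notin> pos_span (P - {d})"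
    proof cases
      case p
      show ?thesis
      proof
        assume "d \<in> pos_span (P - {d})"
        then show False
        proof (rule pos_span_sep[where u = "w k"])
          show "w k \<bullet> d > 0" using apos by (simp add: p inner_commute[of "w k"] bw)
          fix e assume e: "e \<in> P - {d}"
          then consider (p') j where "e = \<alpha> *\<^sub>R b j" "j \<noteq> k" | (m') j where "e = - (\<alpha> *\<^sub>R b j)"
            unfolding P_def p by auto
          then show "w k \<bullet> e \<le> 0"
            by cases (use apos in \<open>simp_all add: inner_commute[of "w k"] bw\<close>)
        qed
      qed
    next
      case m
      show ?thesis
      proof
        assume "d \<in> pos_span (P - {d})"
        then show False
        proof (rule pos_span_sep[where u = "- w k"])
          show "- w k \<bullet> d > 0" using apos by (simp add: m inner_commute[of "w k"] bw)
          fix e assume e: "e \<in> P - {d}"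
          then consider (p') j where "e = \<alpha> *\<^sub>R b j" | (m') j where "e = - (\<alpha> *\<^sub>R b j)" "j \<noteq> k"
            unfolding P_def m by auto
          then show "- w k \<bullet> e \<le> 0"
            by cases (use apos in \<open>simp_all add: inner_commute[of "w k"] bw\<close>)
        qed
      qed
    qed
  qed
  have pb: "positive_basis P" unfolding positive_basis_def using finP span indep by blast
  define \<gamma> where "\<gamma> = (1 - \<delta> * n) / sqrt (n * D)"
  define m where "m = (1 - \<delta> * n) / sqrt n"
  have gm: "\<gamma> = \<alpha> * m" by (simp add: \<gamma>_def \<alpha>_def m_def real_sqrt_mult)
  have mpos: "m > 0" using dn1 npos by (simp add: m_def)
  have gpos: "\<gamma> > 0" using gm apos mpos by simp
  have Pne: "P \<noteq> {}" unfolding P_def by auto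
  have cmeq: "cosine_measure P = Inf ((\<lambda>u. Max ((\<lambda>d. d \<bullet> u) ` P)) ` {u. norm u = 1})"
  proof -
    have "(\<lambda>d. d \<bullet> u / norm d) ` P = (\<lambda>d. d \<bullet> u) ` P" for u
      by (intro image_cong refl) (simp add: normP)
    then show ?thesis unfolding cosine_measure_def by simp
  qed
  have lower: "\<gamma> \<le> Max ((\<lambda>d. d \<bullet> u) ` P)" if nu: "norm u = 1" for u :: "real^'n"
  proof -
    have "\<exists>d\<in>P. \<gamma> \<le> d \<bullet> u"
    proof (rule ccontr)
      assume H: "\<not> (\<exists>d\<in>P. \<gamma> \<le> d \<bullet> u)"
      define S where "S = (\<Sum>i\<in>UNIV. u$i)"
      define v where "v j = b j \<bullet> u" for j
      have vj: "v j = u$j - \<delta> * S" for j by (simp add: v_def ib S_def)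
      have vm: "\<bar>v j\<bar> < m" for j
      proof -
        have "\<not> \<gamma> \<le> (\<alpha> *\<^sub>R b j) \<bullet> u" "\<not> \<gamma> \<le> (- (\<alpha> *\<^sub>R b j)) \<bullet> u"
        proof -
          have "\<alpha> *\<^sub>R b j \<in> P" "- (\<alpha> *\<^sub>R b j) \<in> P" unfolding P_def by blast+
          then show "\<not> \<gamma> \<le> (\<alpha> *\<^sub>R b j) \<bullet> u" "\<not> \<gamma> \<le> (- (\<alpha> *\<^sub>R b j)) \<bullet> u"
            using H by blast+
        qed
        then have "\<alpha> * v j < \<alpha> * m" "\<alpha> * (- v j) < \<alpha> * m" by (auto simp: v_def gm)
        then have "v j < m" "- v j < m" using mult_less_cancel_left_pos[OF apos, of "v j" m] mult_less_cancel_left_pos[OF apos, of "- v j" m] by blast+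
        then show ?thesis by (simp add: abs_less_iff)
      qed
      have sv: "(\<Sum>j\<in>UNIV. v j) = S * (1 - \<delta> * n)"
        by (simp add: vj sum_subtractf S_def n_def algebra_simps)
      have "\<bar>S\<bar> * (1 - \<delta> * n) = \<bar>\<Sum>j\<in>UNIV. v j\<bar>" using sv dn1 by (simp add: abs_mult)
      also have "\<dots> \<le> (\<Sum>j\<in>UNIV. \<bar>v j\<bar>)" by (rule sum_abs)
      also have "\<dots> \<le> n * m" using sum_bounded_above[of UNIV "\<lambda>j. \<bar>v j\<bar>" m] vm
        by (simp add: n_def less_imp_le)
      finally have Sb: "\<bar>S\<bar> * (1 - \<delta> * n) \<le> n * m" .
      have uj: "(u$j)^2 < 1 / n" for j
      proof -
        have "\<bar>u$j\<bar> \<le> \<bar>u$j - \<delta> * S\<bar> + \<bar>\<delta> * S\<bar>" using abs_triangle_ineq[of "u$j - \<delta> * S" "\<delta> * S"] by simp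
        then have "\<bar>u$j\<bar> \<le> \<bar>v j\<bar> + \<delta> * \<bar>S\<bar>" using vj[of j] d0 by (simp add: abs_mult)
        then have "(1 - \<delta> * n) * \<bar>u$j\<bar> < (1 - \<delta> * n) * (m + \<delta> * \<bar>S\<bar>)"
          using vm[of j] dn1 by (intro mult_strict_left_mono) auto
        also have "\<dots> = (1 - \<delta> * n) * m + \<delta> * (\<bar>S\<bar> * (1 - \<delta> * n))" by (simp add: algebra_simps)
        also have "\<dots> \<le> (1 - \<delta> * n) * m + \<delta> * (n * m)" using Sb d0 by (intro add_left_mono mult_left_mono)
        also have "\<dots> = m" by (simp add: algebra_simps)
        also have "\<dots> = (1 - \<delta> * n) * (1 / sqrt n)" by (simp add: m_def)
        finally have h: "(1 - \<delta> * n) * \<bar>u$j\<bar> < (1 - \<delta> * n) * (1 / sqrt n)" .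
        have pos1: "0 < 1 - \<delta> * n" using dn1 by simp
        then have "\<bar>u$j\<bar> < 1 / sqrt n" using h mult_less_cancel_left_pos[OF pos1, of "\<bar>u$j\<bar>" "1 / sqrt n"] by blast
        then have "\<bar>u$j\<bar>^2 < (1 / sqrt n)^2" by (intro power_strict_mono) auto
        then show ?thesis using npos by (simp add: power_divide)
      qed
      have "(\<Sum>j\<in>UNIV. (u$j)^2) < (\<Sum>j\<in>(UNIV::'n set). 1 / n)"
        by (rule sum_strict_mono) (auto simp: uj)
      also have "\<dots> = 1" using npos by (simp add: n_def)
      finally have lt: "(\<Sum>j\<in>UNIV. (u$j)^2) < 1" .
      have "norm u ^ 2 = u \<bullet> u" by (rule power2_norm_eq_inner)
      also have "\<dots> = (\<Sum>j\<in>UNIV. (u$j)^2)" by (simp add: inner_vec_def power2_eq_square)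
      finally have "norm u ^ 2 = (\<Sum>j\<in>UNIV. (u$j)^2)" .
      then show False using lt nu by simp
    qed
    then show ?thesis using finP Pne by (simp add: Max_ge_iff)
  qed
  define u0 where "u0 = (\<chi> i. 1 / sqrt n :: real^'n)"
  have nu0: "norm u0 = 1"
  proof -
    have "u0 \<bullet> u0 = n * (1 / sqrt n * (1 / sqrt n))" by (simp add: u0_def inner_vec_def n_def)
    also have "\<dots> = 1" using npos by simp
    finally show ?thesis by (simp add: norm_eq_sqrt_inner)
  qed
  have bu0: "b j \<bullet> u0 = m" for j
  proof -
    have "b j \<bullet> u0 = 1 / sqrt n - \<delta> * (n * (1 / sqrt n))" by (simp add: ib u0_def n_def)
    then show ?thesis by (simp add: m_def algebra_simps diff_divide_distrib)
  qed
  have mx: "Max ((\<lambda>d. d \<bullet> u0) ` P) = \<gamma>"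
  proof (rule Max_eqI)
    show "finite ((\<lambda>d. d \<bullet> u0) ` P)" using finP by simp
    fix y assume "y \<in> (\<lambda>d. d \<bullet> u0) ` P"
    then show "y \<le> \<gamma>" unfolding P_def using gpos by (auto simp: bu0 gm)
  next
    obtain j :: 'n where True by simp
    have "\<gamma> = (\<alpha> *\<^sub>R b j) \<bullet> u0" by (simp add: bu0 gm)
    moreover have "\<alpha> *\<^sub>R b j \<in> P" unfolding P_def by blast
    ultimately show "\<gamma> \<in> (\<lambda>d. d \<bullet> u0) ` P" by blast
  qed
  have "cosine_measure P = \<gamma>" unfolding cmeq
  proof (rule cInf_eq_minimum)
    show "\<gamma> \<in> (\<lambda>u. Max ((\<lambda>d. d \<bullet> u) ` P)) ` {u. norm u = 1}"
      by (rule image_eqI[where x=u0]) (simp_all add: mx nu0)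
    fix x assume "x \<in> (\<lambda>u. Max ((\<lambda>d. d \<bullet> u) ` P)) ` {u. norm u = 1}"
    then show "\<gamma> \<le> x" using lower by auto
  qed
  then show ?thesis using pb by (simp add: \<gamma>_def)
qed


theorem theorem15:
  fixes \<delta> :: real
  assumes "CARD('n::finite) \<ge> 2"
    and "0 \<le> \<delta>" and "\<delta> < 1 / real CARD('n)"
  shows "let n = real CARD('n);
             B = (mat 1 - \<delta> *\<^sub>R ones_mat) :: real^'n^'n;
             \<alpha> = 1 / sqrt (\<delta>^2 * n - 2 * \<delta> + 1);
             P = (\<lambda>j. \<alpha> *\<^sub>R column j B) ` UNIV \<union> (\<lambda>j. - (\<alpha> *\<^sub>R column j B)) ` UNIV
         in positive_basis P \<and>
            cosine_measure P = (1 - \<delta> * n) / sqrt (n * (\<delta>^2 * n - 2 * \<delta> + 1))"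
  unfolding Let_def col_B using main[OF assms] by simp

end
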